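(* Let $n,m,\ell$ be positive integers. If $f:\mathcal{D}(n)\to\mathcal{D}(m)$ and $g:\mathcal{D}(m)\to\mathcal{D}(\ell)$ are reducing, then so is $g\circ f:\mathcal{D}(n)\to\mathcal{D}(\ell)$.
   Context: For a positive integer $n$, $\mathcal{D}(n)$ is the set of positive divisors of $n$, and $\lambda(n)$ is the least prime factor of $n$ if $n\ge2$, with $\lambda(1)=1$. For positive integers $m,n$, a function $f:\mathcal{D}(n)\to\mathcal{D}(m)$ is called reducing if for all $d,d'\in\mathcal{D}(n)$: (a) $f(d)\le d$; (b) $\frac{m/f(d)}{n/d}\le\min\{1,\ \lambda(m/f(d))/\lambda(n/d)\}$; (c) if $f(d)=2^if(d')$ for some $i\in\mathbb{Z}$, then $d=2^jd'$ for some $j\in\mathbb{Z}$. *)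

theory Defs
  imports Complex_Main "HOL-Computational_Algebra.Primes"
begin

definition Dv :: "nat \<Rightarrow> nat set" where
  "Dv n = {d. 0 < d \<and> d dvd n}"

definition lpf :: "nat \<Rightarrow> nat" where
  "lpf n = (if n \<ge> 2 then Min {p. prime p \<and> p dvd n} else 1)"

text \<open>f : D(n) -> D(m) is reducing (f is only relevant on D(n)).\<close>
definition reducing :: "nat \<Rightarrow> nat \<Rightarrow> (nat \<Rightarrow> nat) \<Rightarrow> bool" where
  "reducing n m f \<longleftrightarrow>
     (\<forall>d\<in>Dv n. f d \<in> Dv m) \<and>
     (\<forall>d\<in>Dv n. f d \<le> d) \<and>
     (\<forall>d\<in>Dv n. (real m / real (f d)) / (real n / real d)
                  \<le> min 1 (real (lpf (m div f d)) / real (lpf (n div d)))) \<and>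
     (\<forall>d\<in>Dv n. \<forall>d'\<in>Dv n.
        (\<exists>i::int. real (f d) = 2 powi i * real (f d')) \<longrightarrow>
        (\<exists>j::int. real d = 2 powi j * real d'))"

end

theory Submission
  imports Defs
begin

lemma ratio_chain:
  fixes a b c p q r :: real
  assumes "a > 0" "b > 0" "c > 0" "p \<ge> 0" "q \<ge> 0" "r \<ge> 0"
    and h1: "a / b \<le> min 1 (p / q)" and h2: "c / a \<le> min 1 (r / p)"
  shows "c / b \<le> min 1 (r / q)"
proof -
  have ab: "a / b \<le> 1" "a / b \<le> p / q" using h1 by auto
  have ca: "c / a \<le> 1" "c / a \<le> r / p" using h2 by auto
  have pos1: "a / b > 0" using assms by simp
  have pos2: "c / a > 0" using assms by simp
  have eq: "c / b = (c / a) * (a / b)" using assms by (simp add: field_simps)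
  have "p / q > 0" using pos1 ab by linarith
  hence pq: "p > 0" "q > 0" using assms
    by (metis div_0 less_eq_real_def divide_eq_0_iff)+
  have "c / b \<le> 1 * 1" unfolding eq
    by (rule mult_mono) (use ab ca pos1 pos2 in auto)
  moreover have "c / b \<le> (r / p) * (p / q)" unfolding eq
    by (rule mult_mono) (use ab ca pos1 pos2 assms in auto)
  moreover have "(r / p) * (p / q) = r / q" using pq by simp
  ultimately show ?thesis using pq by simp
qed

theorem lemma3p7:
  fixes n m l :: nat and f g :: "nat \<Rightarrow> nat"
  assumes "0 < n" "0 < m" "0 < l"
    and "reducing n m f" and "reducing m l g"
  shows "reducing n l (g \<circ> f)"
proof -
  note F = assms(4)[unfolded reducing_def]
  note G = assms(5)[unfolded reducing_def]
  have fD: "\<And>d. d \<in> Dv n \<Longrightarrow> f d \<in> Dv m" using F by blast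
  have gD: "\<And>e. e \<in> Dv m \<Longrightarrow> g e \<in> Dv l" using G by blast
  show ?thesis unfolding reducing_def
  proof (intro conjI ballI impI)
    fix d assume d: "d \<in> Dv n"
    show "(g \<circ> f) d \<in> Dv l" using fD gD d by simp
    have "g (f d) \<le> f d" using G fD d by blast
    moreover have "f d \<le> d" using F d by blast
    ultimately show "(g \<circ> f) d \<le> d" by simp
    have e: "f d \<in> Dv m" using fD d .
    have ge: "g (f d) \<in> Dv l" using gD e .
    have h1: "(real m / real (f d)) / (real n / real d)
                  \<le> min 1 (real (lpf (m div f d)) / real (lpf (n div d)))" using F d by blast
    have h2: "(real l / real (g (f d))) / (real m / real (f d))
                  \<le> min 1 (real (lpf (l div g (f d))) / real (lpf (m div f d)))" using G e by blast
    have p1: "real m / real (f d) > 0" using e assms by (simp add: Dv_def)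
    have p2: "real n / real d > 0" using d assms by (simp add: Dv_def)
    have p3: "real l / real (g (f d)) > 0" using ge assms by (simp add: Dv_def)
    show "(real l / real ((g \<circ> f) d)) / (real n / real d)
                  \<le> min 1 (real (lpf (l div (g \<circ> f) d)) / real (lpf (n div d)))"
      using ratio_chain[OF p1 p2 p3 _ _ _ h1 h2] by simp
  next
    fix d d' assume d: "d \<in> Dv n" and d': "d' \<in> Dv n"
      and h: "\<exists>i::int. real ((g \<circ> f) d) = 2 powi i * real ((g \<circ> f) d')"
    have "\<exists>i::int. real (f d) = 2 powi i * real (f d')"
      using G fD[OF d] fD[OF d'] h by auto
    thus "\<exists>j::int. real d = 2 powi j * real d'" using F d d' by blast
  qed
qed

end
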